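(* Let $k$ and $n$ be integers such that $k \geq 2$ and $n \geq 2k$, and let $(V,\mathcal{A}')$ be a partial $k$-star design of order $n$ with fewer than $u(n,k)$ stars. Then the leftover $L'$ of $(V,\mathcal{A}')$ contains a $k$-star.
   Context: A $k$-star is a copy of $K_{1,k}$. A partial $k$-star design of order $n$ is a pair $(V,\mathcal{A})$ where $V$ is a set of $n$ vertices and $\mathcal{A}$ is a set of edge-disjoint $k$-stars that are subgraphs of the complete graph $K_V$. The leftover of $(V,\mathcal{A})$ is the graph on vertex set $V$ whose edges are the edges of $K_V$ not lying in any star of $\mathcal{A}$. Here \[u(n,k)= \begin{cases} 2 \lfloor \frac{n-2}{k} \rfloor-1 & \text{if $n \not \equiv 1\pmod{k}$},\\ \frac{2(n-1)}{k} - 2 & \text{if $n \equiv 1\pmod{k}$.} \end{cases} \] *)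

theory Defs
  imports Main
begin

definition complete_edges :: "'a set \<Rightarrow> 'a set set" where
  "complete_edges V = {e. e \<subseteq> V \<and> card e = 2}"

(* A k-star (copy of K_{1,k}) in K_V, represented by its edge set:
   a centre c and k distinct leaves x (all in V, all different from c) *)
definition is_star :: "nat \<Rightarrow> 'a set \<Rightarrow> 'a set set \<Rightarrow> bool" where
  "is_star k V S \<longleftrightarrow> (\<exists>c X. c \<in> V \<and> X \<subseteq> V - {c} \<and> card X = k \<and>
      S = (\<lambda>x. {c, x}) ` X)"

definition partial_star_design :: "nat \<Rightarrow> nat \<Rightarrow> 'a set \<Rightarrow> 'a set set set \<Rightarrow> bool" where
  "partial_star_design n k V A \<longleftrightarrow> finite V \<and> card V = n \<and>
      (\<forall>S\<in>A. is_star k V S) \<and>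
      (\<forall>S\<in>A. \<forall>T\<in>A. S \<noteq> T \<longrightarrow> S \<inter> T = {})"

(* Edge set of the leftover graph (its vertex set is V) *)
definition leftover_edges :: "'a set \<Rightarrow> 'a set set set \<Rightarrow> 'a set set" where
  "leftover_edges V A = complete_edges V - \<Union>A"

definition u :: "nat \<Rightarrow> nat \<Rightarrow> int" where
  "u n k = (if n mod k \<noteq> 1 mod k then 2 * ((int n - 2) div int k) - 1
            else 2 * (int n - 1) div int k - 2)"

end

theory Submission
  imports Defs
begin

lemma u_bound:
  assumes "k \<ge> 2" and "n \<ge> 2 * k"
  shows "u n k \<le> int n - int k"
proof -
  have key: "int k * (int n - int k) \<ge> 2 * (int n - 2)"
  proof -
    have "(int k - 2) * (int n - int k - 2) \<ge> 0" using assms by simp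
    thus ?thesis by (simp add: algebra_simps)
  qed
  have kp: "int k > 0" using assms by simp
  show ?thesis
  proof (cases "n mod k \<noteq> 1 mod k")
    case True
    define d where "d = (int n - 2) div int k"
    have "int k * d \<le> int n - 2" unfolding d_def
      using mult.commute[of "int k" "(int n - 2) div int k"] div_mult_mod_eq[of "int n - 2" "int k"]
        pos_mod_sign[of "int k" "int n - 2"] kp
      by linarith
    hence "int k * (2 * d) \<le> int k * (int n - int k)" using key by (simp add: algebra_simps)
    hence "2 * d \<le> int n - int k" using kp by simp
    thus ?thesis using True unfolding u_def d_def by simp
  next
    case False
    define q where "q = 2 * (int n - 1) div int k"
    have "int k * q \<le> 2 * (int n - 1)" unfolding q_def
      using mult.commute[of "int k" "2 * (int n - 1) div int k"] div_mult_mod_eq[of "2 * (int n - 1)" "int k"]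
        pos_mod_sign[of "int k" "2 * (int n - 1)"] kp
      by linarith
    moreover have "int k * (int n - int k + 2) = int k * (int n - int k) + 2 * int k"
      by (simp add: algebra_simps)
    moreover have "2 * (int n - 1) \<le> int k * (int n - int k) + 2 * int k" proof -
      have "int k \<ge> 2" using assms(1) by simp
      then show ?thesis using key by (smt (verit))
    qed
    ultimately have "int k * q \<le> int k * (int n - int k + 2)" by simp
    hence "q \<le> int n - int k + 2" using kp by simp
    thus ?thesis using False unfolding u_def q_def by simp
  qed
qed

theorem lemma4:
  fixes V :: "'a set" and A :: "'a set set set" and n k :: nat
  assumes "k \<ge> 2" and "n \<ge> 2 * k"
    and "partial_star_design n k V A"
    and "int (card A) < u n k"
  shows "\<exists>S. is_star k V S \<and> S \<subseteq> leftover_edges V A"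
proof -
  have fV: "finite V" and cV: "card V = n" and st: "\<And>S. S \<in> A \<Longrightarrow> is_star k V S"
    using assms(3) unfolding partial_star_design_def by auto
  have lt: "card A + k < n" using u_bound[OF assms(1,2)] assms(4) by linarith
  define P where "P = (\<lambda>S c. \<exists>X. c \<in> V \<and> X \<subseteq> V - {c} \<and> card X = k \<and> S = (\<lambda>x. {c, x}) ` X)"
  define cen where "cen = (\<lambda>S. SOME c. P S c)"
  have cenP: "P S (cen S)" if "S \<in> A" for S
    unfolding cen_def by (rule someI_ex) (use st[OF that] in \<open>auto simp: is_star_def P_def\<close>)
  have fA: "finite A"
  proof (rule finite_subset)
    show "A \<subseteq> Pow (Pow V)"
    proof
      fix S assume "S \<in> A"
      from cenP[OF this] obtain c X where "c \<in> V" "X \<subseteq> V" "S = (\<lambda>x. {c, x}) ` X"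
        unfolding P_def by auto
      thus "S \<in> Pow (Pow V)" by auto
    qed
    show "finite (Pow (Pow V))" using fV by simp
  qed
  have cc: "card (cen ` A) \<le> card A" using fA by (rule card_image_le)
  have "\<not> V \<subseteq> cen ` A"
  proof
    assume "V \<subseteq> cen ` A"
    hence "card V \<le> card (cen ` A)" using fA by (simp add: card_mono)
    thus False using cc cV lt by linarith
  qed
  then obtain v where vV: "v \<in> V" and vc: "v \<notin> cen ` A" by blast
  define Y where "Y = {x \<in> V - {v}. {v, x} \<notin> \<Union>A}"
  have sub: "(V - {v}) - Y \<subseteq> cen ` A"
  proof
    fix x assume x: "x \<in> (V - {v}) - Y"
    then obtain S where S: "S \<in> A" "{v, x} \<in> S" unfolding Y_def by auto
    from cenP[OF S(1)] obtain X where X: "S = (\<lambda>x. {cen S, x}) ` X" unfolding P_def by auto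
    then obtain y where "{v, x} = {cen S, y}" using S(2) by auto
    moreover have "v \<noteq> cen S" using vc S(1) by auto
    ultimately have "x = cen S" by (metis doubleton_eq_iff)
    thus "x \<in> cen ` A" using S(1) by auto
  qed
  have "card ((V - {v}) - Y) \<le> card A"
    using card_mono[OF finite_imageI[OF fA] sub] cc by linarith
  moreover have "card ((V - {v}) - Y) = (n - 1) - card Y"
    using card_Diff_subset[of Y "V - {v}"] fV vV cV unfolding Y_def by auto
  ultimately have "k \<le> card Y" using lt by linarith
  then obtain X where X: "X \<subseteq> Y" "card X = k" by (meson obtain_subset_with_card_n)
  show ?thesis
  proof (intro exI conjI)
    show "is_star k V ((\<lambda>x. {v, x}) ` X)" unfolding is_star_def
      using vV X Y_def by blast
    show "(\<lambda>x. {v, x}) ` X \<subseteq> leftover_edges V A"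
    proof
      fix e assume "e \<in> (\<lambda>x. {v, x}) ` X"
      then obtain x where e: "e = {v, x}" and x: "x \<in> Y" using X(1) by auto
      hence "x \<in> V" "x \<noteq> v" "{v, x} \<notin> \<Union>A" unfolding Y_def by auto
      thus "e \<in> leftover_edges V A" using e vV
        unfolding leftover_edges_def complete_edges_def by auto
    qed
  qed
qed

end
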